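(* Consider the chunk-based peer-to-peer streaming model described in the context, in which every node has normalized upload capacity $U$ (an integer $\ge 1$) and there is no restriction on the number of neighbors a node may deliver chunks to. Then for every integer $t\ge 0$ the stream diffusion metric satisfies $$N(t)\le \sum_{j=1}^{U} S_\infty(t-j+1).$$ In particular, for every integer $t\ge U$, $$N(t)\le \sum_{j=1}^{U}2^{t-j}=2^t\,(1-2^{-U}).$$
   Context: $S_\infty(n)=0$ for $n\le 0$ and $S_\infty(n)=\sum_{i=1}^n F_\infty(i)$ for $n>0$, where $F_\infty(i)=0$ for $i\le 0$, $F_\infty(1)=1$, and $F_\infty(i)=\sum_{j\ge 1}F_\infty(i-j)=\sum_{m<i}F_\infty(m)$ for $i>1$. Consequently $S_\infty(n)=2^{n-1}$ for $n\ge 1$. Model: there is a source and a set $\mathcal P$ of peers. The source generates chunk $c=1,2,\dots$ at time $(c-1)U$, with time measured in units of the time needed to transmit one chunk at a node's full upload bandwidth. Every node has total upload rate at most one chunk per time unit, which it may split arbitrarily among simultaneous transmissions. Forwarding is store-and-forward: a chunk must be fully received before it is forwarded. Download bandwidth is unlimited, and propagation and queueing delays are zero. $d(c,p)$ is the time from the generation of chunk $c$ to the completion of its reception at peer $p$, and $D(p)=\sup_c d(c,p)$. The stream diffusion metric is $N(t)=|\{p\in\mathcal P:D(p)\le t\}|$. *)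

theory Defs
  imports "HOL-Analysis.Analysis"
begin

function F_inf :: "int \<Rightarrow> nat" where
  "F_inf i = (if i \<le> 0 then 0 else if i = 1 then 1
              else (\<Sum>m\<in>{1..<i}. F_inf m))"
  by auto
termination
  by (relation "Wellfounded.measure nat") auto

declare F_inf.simps [simp del]

definition S_inf :: "int \<Rightarrow> nat" where
  "S_inf n = (if n \<le> 0 then 0 else (\<Sum>i\<in>{1..n}. F_inf i))"

text \<open>Nodes are of type 'p option: None is the source, Some q is peer q.
  A schedule x assigns to every sender s, receiver p and chunk c a bandwidth
  (rate) function x s p c :: real => real; time is real, measured in units of
  one chunk transmission at full upload bandwidth. Chunks are c = 1,2,...;
  chunk c is generated at the source at time (c-1)U.\<close>

type_synonym 'p schedule = "'p option \<Rightarrow> 'p \<Rightarrow> nat \<Rightarrow> real \<Rightarrow> real"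

definition sent :: "'p schedule \<Rightarrow> 'p option \<Rightarrow> 'p \<Rightarrow> nat \<Rightarrow> real \<Rightarrow> real" where
  "sent x s p c tau = integral {0..tau} (x s p c)"

definition is_node :: "'p set \<Rightarrow> 'p option \<Rightarrow> bool" where
  "is_node P s \<longleftrightarrow> (s = None \<or> (\<exists>q\<in>P. s = Some q))"

text \<open>Time at which peer p has completely received chunk c (from a single
  sender, store-and-forward of whole chunks); infinity if never.\<close>
definition recv :: "'p set \<Rightarrow> 'p schedule \<Rightarrow> 'p \<Rightarrow> nat \<Rightarrow> ereal" where
  "recv P x p c = Inf {ereal tau | tau s. tau \<ge> 0 \<and> is_node P s \<and> sent x s p c tau \<ge> 1}"

definition valid_schedule :: "'p set \<Rightarrow> nat \<Rightarrow> 'p schedule \<Rightarrow> bool" where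
  "valid_schedule P U x \<longleftrightarrow>
     \<comment> \<open>rates are nonnegative and locally integrable\<close>
     (\<forall>s p c tau. x s p c tau \<ge> 0) \<and>
     (\<forall>s p c tau. (x s p c) integrable_on {0..tau}) \<and>
     \<comment> \<open>only actual nodes send, only peers receive, only chunks c \<ge> 1 exist\<close>
     (\<forall>s p c tau. (\<not> is_node P s \<or> p \<notin> P \<or> c = 0) \<longrightarrow> x s p c tau = 0) \<and>
     \<comment> \<open>upload capacity: total rate of every node is at most one chunk per time unit\<close>
     (\<forall>s tau F. finite F \<longrightarrow> (\<Sum>(p, c)\<in>F. x s p c tau) \<le> 1) \<and>
     \<comment> \<open>source can only send chunk c after its generation time (c-1)U\<close>
     (\<forall>p c tau. x None p c tau > 0 \<longrightarrow> real ((c - 1) * U) \<le> tau) \<and>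
     \<comment> \<open>store-and-forward: a peer forwards c only after fully receiving it\<close>
     (\<forall>q p c tau. x (Some q) p c tau > 0 \<longrightarrow> recv P x q c \<le> ereal tau)"

definition delay :: "'p set \<Rightarrow> nat \<Rightarrow> 'p schedule \<Rightarrow> nat \<Rightarrow> 'p \<Rightarrow> ereal" where
  "delay P U x c p = recv P x p c - ereal (real ((c - 1) * U))"

definition Dmax :: "'p set \<Rightarrow> nat \<Rightarrow> 'p schedule \<Rightarrow> 'p \<Rightarrow> ereal" where
  "Dmax P U x p = (SUP c\<in>{1..}. delay P U x c p)"

definition Ndiff :: "'p set \<Rightarrow> nat \<Rightarrow> 'p schedule \<Rightarrow> real \<Rightarrow> nat" where
  "Ndiff P U x t = card {p\<in>P. Dmax P U x p \<le> ereal t}"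

end

theory Submission
  imports Defs
begin



lemma geo_bound:
  fixes r :: "'a \<Rightarrow> real" and a :: real
  assumes "finite K"
    and "\<And>S R. S \<subseteq> K \<Longrightarrow> S \<noteq> {} \<Longrightarrow> (\<forall>q\<in>S. r q \<le> R) \<Longrightarrow> real (card S) \<le> R - a"
  shows "(\<Sum>q\<in>K. 2 powr (- r q)) \<le> 2 powr (-a) - 2 powr (-a - real (card K))"
  using assms
proof (induction "card K" arbitrary: K)
  case 0
  then show ?case by simp
next
  case (Suc n)
  then have Kne: "K \<noteq> {}" by auto
  define m where "m = Max (r ` K)"
  have "m \<in> r ` K" unfolding m_def using Suc.prems Kne by auto
  then obtain q0 where q0: "q0 \<in> K" "r q0 = m" by auto
  have qmax: "\<forall>q\<in>K. r q \<le> r q0" using q0 Suc.prems unfolding m_def by auto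
  have cK: "real (card K) \<le> r q0 - a" using Suc.prems(2)[of K "r q0"] Kne qmax by auto
  define K' where "K' = K - {q0}"
  have cK': "card K' = n" using Suc.hyps(2) q0 unfolding K'_def by auto
  have hyp': "real (card S) \<le> R - a" if "S \<subseteq> K'" "S \<noteq> {}" "\<forall>q\<in>S. r q \<le> R" for S R
    using Suc.prems(2)[of S R] that unfolding K'_def by auto
  have IH: "(\<Sum>q\<in>K'. 2 powr (- r q)) \<le> 2 powr (-a) - 2 powr (-a - real n)"
    using Suc.hyps(1)[of K', OF cK'[symmetric]] hyp' Suc.prems(1) cK' unfolding K'_def by auto
  have s: "(\<Sum>q\<in>K. 2 powr (- r q)) = 2 powr (- r q0) + (\<Sum>q\<in>K'. 2 powr (- r q))"
    unfolding K'_def using Suc.prems(1) q0(1) by (simp add: sum.remove)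
  have "- r q0 \<le> -a - real (Suc n)" using cK Suc.hyps(2) by simp
  then have h1: "2 powr (- r q0) \<le> 2 powr (-a - real (Suc n))" by simp
  have e: "-a - real n = 1 + (-a - real (Suc n))" by simp
  have h2: "2 powr (-a - real n) = 2 * 2 powr (-a - real (Suc n))"
    by (subst e, subst powr_add) simp
  show ?case using s IH h1 h2 Suc.hyps(2) by (simp only:)
qed

lemma abel:
  fixes V :: "nat \<Rightarrow> real" and U M :: nat
  assumes "\<And>a. 1 \<le> a \<Longrightarrow> a \<le> M \<Longrightarrow> (2::real)^((a-1)*U) * (\<Sum>c\<in>{a..M}. V c) \<le> 1"
  shows "(\<Sum>c\<in>{1..M}. (2::real)^((c-1)*U) * V c) \<le> 1 + real (M - 1) * (1 - (1/2)^U)"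
proof (cases "M = 0")
  case True then show ?thesis by simp
next
  case False
  have claim: "k < M \<Longrightarrow> (\<Sum>c\<in>{M-k..M}. (2::real)^((c-1)*U) * V c)
      \<le> 2^((M-k-1)*U) * (\<Sum>c\<in>{M-k..M}. V c) + real k * (1 - (1/2)^U)" for k
  proof (induction k)
    case 0 then show ?case by (simp add: sum_distrib_left)
  next
    case (Suc k)
    define a where "a = M - Suc k"
    have a1: "a \<ge> 1" and aM: "a < M" using Suc.prems unfolding a_def by auto
    have ak: "M - k = a + 1" unfolding a_def using Suc.prems by auto
    have iv: "{a..M} = insert a {a+1..M}" using aM by auto
    define T where "T = (\<Sum>c\<in>{a+1..M}. V c)"
    define e where "e = (2::real)^((a-1)*U)"
    define E where "E = (2::real)^(a*U)"
    have eE: "E = e * 2^U" unfolding e_def E_def using a1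
      by (metis Suc_diff_1 less_le_trans mult_Suc power_add zero_less_one mult.commute add.commute)
    have ET: "E * T \<le> 1" using assms[of "a+1"] aM unfolding E_def T_def by simp
    have IH: "(\<Sum>c\<in>{a+1..M}. (2::real)^((c-1)*U) * V c) \<le> E * T + real k * (1 - (1/2)^U)"
      using Suc.IH Suc.prems ak unfolding E_def T_def by simp
    have s1: "(\<Sum>c\<in>{a..M}. (2::real)^((c-1)*U) * V c) = e * V a + (\<Sum>c\<in>{a+1..M}. (2::real)^((c-1)*U) * V c)"
      unfolding iv e_def by simp
    have s2: "(\<Sum>c\<in>{a..M}. V c) = V a + T" unfolding iv T_def by simp
    have h: "(1/2::real)^U * 2^U = 1" by (simp add: power_mult_distrib[symmetric])
    have "E * T - e * T = (1 - (1/2)^U) * (E * T)" using eE h by (simp add: algebra_simps)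
    also have "\<dots> \<le> (1 - (1/2)^U) * 1"
      by (rule mult_left_mono[OF ET]) (simp add: power_le_one)
    finally have key: "E * T - e * T \<le> 1 - (1/2)^U" by simp
    have goal: "(\<Sum>c\<in>{a..M}. (2::real)^((c-1)*U) * V c) \<le> e * (\<Sum>c\<in>{a..M}. V c) + real (Suc k) * (1 - (1/2)^U)"
      using s1 s2 IH key by (simp add: algebra_simps)
    show ?case using goal unfolding e_def a_def .
  qed
  have "M - (M - 1) = 1" using False by simp
  then show ?thesis using claim[of "M-1"] assms[of 1] False by simp
qed



lemma F_inf_eq_S: "k \<ge> 1 \<Longrightarrow> F_inf (int k + 1) = S_inf (int k)"
  by (subst F_inf.simps) (simp add: S_inf_def atLeastLessThanPlusOne_atLeastAtMost_int)

lemma S_inf_nat: "k \<ge> 1 \<Longrightarrow> S_inf (int k) = 2^(k-1)"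
proof (induction k)
  case 0 then show ?case by simp
next
  case (Suc k)
  show ?case
  proof (cases "k = 0")
    case True
    then show ?thesis by (simp add: S_inf_def F_inf.simps)
  next
    case False
    have "S_inf (int (Suc k)) = S_inf (int k) + F_inf (int k + 1)"
      unfolding S_inf_def using False
      by (simp add: atLeastAtMostPlus1_int_conv add.commute)
    also have "\<dots> = 2 * S_inf (int k)" using F_inf_eq_S[of k] False by simp
    finally show ?thesis using Suc.IH False by (simp add: power_eq_if)
  qed
qed

lemma S_sum: "real (\<Sum>j\<in>{1..U}. S_inf (int t - int j + 1)) = 2^t - 2^(t - min t U)"
proof (induction U)
  case 0 then show ?case by simp
next
  case (Suc U)
  have e: "int t - int (Suc U) + 1 = int t - int U" by simp
  show ?case
  proof (cases "Suc U \<le> t")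
    case True
    have "S_inf (int t - int U) = 2^(t - Suc U)"
      using S_inf_nat[of "t - U"] True by (simp add: of_nat_diff)
    moreover have "(2::real)^(t-U) = 2 * 2^(t - Suc U)" using True
      by (metis Suc_diff_Suc Suc_le_lessD power_Suc)
    ultimately show ?thesis using Suc.IH True by (simp add: e min_def)
  next
    case False
    have "S_inf (int t - int U) = 0" using False by (simp add: S_inf_def)
    then show ?thesis using Suc.IH False by (simp add: e min_def)
  qed
qed

lemma pow_sum: "t \<ge> U \<Longrightarrow> (\<Sum>j\<in>{1..U}. (2::real) ^ (t - j)) = 2 ^ t * (1 - (1/2) ^ U)"
proof (induction U)
  case 0 then show ?case by simp
next
  case (Suc U)
  have "(2::real)^t * (1/2)^U = 2^(t-U)" using Suc.prems
    by (simp add: power_diff power_one_over field_simps)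
  moreover have "(2::real)^t * (1/2)^(Suc U) = 2^(t - Suc U)" using Suc.prems
    by (simp add: power_diff power_one_over field_simps del: power_Suc)
  moreover have "(2::real)^(t-U) = 2 * 2^(t - Suc U)" using Suc.prems
    by (metis Suc_diff_Suc Suc_le_lessD power_Suc)
  ultimately show ?case using Suc by (simp add: algebra_simps)
qed



lemma vs_nonneg: "valid_schedule P U x \<Longrightarrow> 0 \<le> x s p c \<tau>"
  unfolding valid_schedule_def by (drule conjunct1) simp
lemma vs_int: "valid_schedule P U x \<Longrightarrow> x s p c integrable_on {0..\<tau>}"
  unfolding valid_schedule_def by (drule conjunct2, drule conjunct1) simp
lemma vs_cap: "valid_schedule P U x \<Longrightarrow> finite F \<Longrightarrow> (\<Sum>(p, c)\<in>F. x s p c \<tau>) \<le> 1"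
  unfolding valid_schedule_def by blast
lemma vs_src: "valid_schedule P U x \<Longrightarrow> x None p c \<tau> > 0 \<Longrightarrow> real ((c - 1) * U) \<le> \<tau>"
  unfolding valid_schedule_def by blast
lemma vs_fwd: "valid_schedule P U x \<Longrightarrow> x (Some q) p c \<tau> > 0 \<Longrightarrow> recv P x q c \<le> ereal \<tau>"
  unfolding valid_schedule_def by blast

lemma sent_mono: "valid_schedule P U x \<Longrightarrow> \<tau>1 \<le> \<tau>2 \<Longrightarrow> sent x s p c \<tau>1 \<le> sent x s p c \<tau>2"
  unfolding sent_def
  by (rule integral_subset_le) (auto intro: vs_int vs_nonneg)

lemma recv_nonneg: "0 \<le> recv P x q c"
  unfolding recv_def by (rule Inf_greatest) auto

lemma recv_le: "is_node P s \<Longrightarrow> 0 \<le> \<tau> \<Longrightarrow> 1 \<le> sent x s q c \<tau> \<Longrightarrow> recv P x q c \<le> ereal \<tau>"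
  unfolding recv_def by (rule Inf_lower) blast

lemma finite_nodes: "finite P \<Longrightarrow> finite {s. is_node P s}"
proof -
  assume "finite P"
  have "{s. is_node P s} = insert None (Some ` P)" unfolding is_node_def by auto
  then show ?thesis using \<open>finite P\<close> by simp
qed

lemma recv_attained:
  assumes V: "valid_schedule P U x" and fP: "finite P" and r: "recv P x q c = ereal v"
  shows "\<exists>s. is_node P s \<and> 0 \<le> v \<and> 1 \<le> sent x s q c v"
proof (rule ccontr)
  assume neg: "\<not> ?thesis"
  have v0: "0 \<le> v" using recv_nonneg[of P x q c] r by simp
  then have lt: "\<forall>s\<in>{s. is_node P s}. sent x s q c v < 1" using neg by auto
  have ev: "\<forall>s\<in>{s. is_node P s}. eventually (\<lambda>\<tau>. sent x s q c \<tau> < 1) (at v within {0..v+1})"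
  proof
    fix s assume s: "s \<in> {s. is_node P s}"
    have "continuous_on {0..v+1} (\<lambda>\<tau>. integral {0..\<tau>} (x s q c))"
      by (rule indefinite_integral_continuous_1) (rule vs_int[OF V])
    moreover have vin: "v \<in> {0..v+1}" using v0 by simp
    ultimately have "((\<lambda>\<tau>. integral {0..\<tau>} (x s q c)) \<longlongrightarrow> integral {0..v} (x s q c)) (at v within {0..v+1})"
      unfolding continuous_on_def by blast
    then have tt: "((\<lambda>\<tau>. sent x s q c \<tau>) \<longlongrightarrow> sent x s q c v) (at v within {0..v+1})"
      unfolding sent_def .
    have "sent x s q c v < 1" using lt s by blast
    then show "eventually (\<lambda>\<tau>. sent x s q c \<tau> < 1) (at v within {0..v+1})"
      by (rule order_tendstoD(2)[OF tt])
  qed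
  have "eventually (\<lambda>\<tau>. \<forall>s\<in>{s. is_node P s}. sent x s q c \<tau> < 1) (at v within {0..v+1})"
    by (rule eventually_ball_finite[OF finite_nodes[OF fP] ev])
  then obtain d where d: "d > 0" and
    dd: "\<And>\<tau>. \<tau> \<in> {0..v+1} \<Longrightarrow> \<tau> \<noteq> v \<Longrightarrow> dist \<tau> v < d \<Longrightarrow> \<forall>s\<in>{s. is_node P s}. sent x s q c \<tau> < 1"
    unfolding eventually_at by blast
  define b where "b = v + min d 1"
  have "ereal b \<le> recv P x q c"
    unfolding recv_def
  proof (rule Inf_greatest, clarify)
    fix \<tau> s assume t0: "0 \<le> \<tau>" and sn: "is_node P s" and st: "1 \<le> sent x s q c \<tau>"
    show "ereal b \<le> ereal \<tau>"
    proof (rule ccontr)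
      assume "\<not> ereal b \<le> ereal \<tau>"
      then have tb: "\<tau> < b" by simp
      show False
      proof (cases "\<tau> \<le> v")
        case True
        then have "sent x s q c \<tau> \<le> sent x s q c v" by (rule sent_mono[OF V])
        moreover have "sent x s q c v < 1" using lt sn by blast
        ultimately show False using st by linarith
      next
        case False
        then have "\<tau> \<in> {0..v+1}" "\<tau> \<noteq> v" "dist \<tau> v < d" using tb t0 unfolding b_def dist_real_def by auto
        then have "\<forall>s\<in>{s. is_node P s}. sent x s q c \<tau> < 1" by (rule dd)
        then have "sent x s q c \<tau> < 1" using sn by blast
        then show False using st by linarith
      qed
    qed
  qed
  moreover have "v < b" unfolding b_def using d by simp
  ultimately show False using r by simp
qed

lemma count_bound:
  fixes f :: "'i \<Rightarrow> real \<Rightarrow> real"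
  assumes "finite S" "S \<noteq> {}" "\<And>i \<tau>. i\<in>S \<Longrightarrow> 0 \<le> f i \<tau>"
    "\<And>i. i\<in>S \<Longrightarrow> f i integrable_on {0..R}" "\<And>\<tau>. (\<Sum>i\<in>S. f i \<tau>) \<le> 1"
    "\<And>i \<tau>. i\<in>S \<Longrightarrow> \<tau> < a \<Longrightarrow> f i \<tau> = 0" "0 \<le> a"
    "\<And>i. i\<in>S \<Longrightarrow> 1 \<le> integral {0..R} (f i)"
  shows "real (card S) \<le> R - a"
proof -
  have ind: "(\<lambda>\<tau>::real. if \<tau> \<in> {a..} then 1 else (0::real)) integrable_on {0..R}"
    unfolding integrable_restrict_Int using assms(7) by (simp add: Int_atLeastAtMost integrable_const_ivl)
  have "real (card S) = (\<Sum>i\<in>S. 1)" by simp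
  also have "\<dots> \<le> (\<Sum>i\<in>S. integral {0..R} (f i))" by (rule sum_mono) (rule assms(8))
  also have "\<dots> = integral {0..R} (\<lambda>\<tau>. \<Sum>i\<in>S. f i \<tau>)"
    by (rule integral_sum[symmetric]) (use assms in auto)
  also have "\<dots> \<le> integral {0..R} (\<lambda>\<tau>::real. if \<tau> \<in> {a..} then 1 else (0::real))"
  proof (rule integral_le)
    show "(\<lambda>\<tau>. \<Sum>i\<in>S. f i \<tau>) integrable_on {0..R}" by (rule integrable_sum) (use assms in auto)
    show "(\<lambda>\<tau>::real. if \<tau> \<in> {a..} then 1 else (0::real)) integrable_on {0..R}" by (rule ind)
    fix \<tau> assume "\<tau> \<in> {0..R}"
    show "(\<Sum>i\<in>S. f i \<tau>) \<le> (if \<tau> \<in> {a..} then 1 else 0)"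
    proof (cases "a \<le> \<tau>")
      case True then show ?thesis using assms(5)[of \<tau>] by simp
    next
      case False
      then have "(\<Sum>i\<in>S. f i \<tau>) = 0" using assms(6)[of _ \<tau>] by (intro sum.neutral) simp
      then show ?thesis using False by simp
    qed
  qed
  also have "\<dots> = integral {a..R} (\<lambda>_. 1)"
    unfolding integral_restrict_Int using assms(7) by (simp add: Int_atLeastAtMost)
  also have "\<dots> = (if a \<le> R then R - a else 0)" by simp
  finally have c: "real (card S) \<le> (if a \<le> R then R - a else 0)" .
  have "card S \<ge> 1" using assms(1,2) by (simp add: Suc_leI card_gt_0_iff)
  then show ?thesis using c by (auto split: if_splits)
qed



definition rq :: "'p set \<Rightarrow> 'p schedule \<Rightarrow> nat \<Rightarrow> 'p \<Rightarrow> real" where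
  "rq P x c q = real_of_ereal (recv P x q c)"
definition par :: "'p set \<Rightarrow> 'p schedule \<Rightarrow> nat \<Rightarrow> 'p \<Rightarrow> 'p option" where
  "par P x c q = (SOME s. is_node P s \<and> 1 \<le> sent x s q c (rq P x c q))"
definition Hs :: "'p set \<Rightarrow> 'p schedule \<Rightarrow> nat \<Rightarrow> real \<Rightarrow> 'p set" where
  "Hs P x c T = {q\<in>P. recv P x q c \<le> ereal T}"

lemma hs_facts:
  assumes V: "valid_schedule P U x" and fP: "finite P" and q: "q \<in> Hs P x c T"
  shows "recv P x q c = ereal (rq P x c q) \<and> 0 \<le> rq P x c q \<and> rq P x c q \<le> T
    \<and> is_node P (par P x c q) \<and> 1 \<le> sent x (par P x c q) q c (rq P x c q)"
proof -
  have le: "recv P x q c \<le> ereal T" using q unfolding Hs_def by simp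
  have ge: "0 \<le> recv P x q c" by (rule recv_nonneg)
  obtain v where v: "recv P x q c = ereal v" using le ge by (cases "recv P x q c") auto
  have rv: "rq P x c q = v" unfolding rq_def v by simp
  obtain s where s: "is_node P s" "0 \<le> v" "1 \<le> sent x s q c v"
    using recv_attained[OF V fP v] by blast
  have "is_node P (par P x c q) \<and> 1 \<le> sent x (par P x c q) q c (rq P x c q)"
    unfolding par_def rv by (rule someI[of _ s]) (use s in simp)
  then show ?thesis using v rv s le by simp
qed

lemma parent_in:
  assumes V: "valid_schedule P U x" and fP: "finite P" and q: "q \<in> Hs P x c T"
    and pq: "par P x c q = Some p"
  shows "p \<in> Hs P x c T \<and> rq P x c p \<le> rq P x c q"
proof -
  note hq = hs_facts[OF V fP q]
  have pP: "p \<in> P" using hq pq unfolding is_node_def by auto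
  have rl: "recv P x p c \<le> ereal (rq P x c q)"
  proof (rule ccontr)
    assume nr: "\<not> recv P x p c \<le> ereal (rq P x c q)"
    have z: "x (Some p) q c \<tau> = 0" if "\<tau> \<in> {0..rq P x c q}" for \<tau>
    proof (rule ccontr)
      assume "x (Some p) q c \<tau> \<noteq> 0"
      then have "x (Some p) q c \<tau> > 0" using vs_nonneg[OF V, of "Some p" q c \<tau>] by simp
      then have "recv P x p c \<le> ereal \<tau>" by (rule vs_fwd[OF V])
      moreover have "ereal \<tau> \<le> ereal (rq P x c q)" using that by simp
      ultimately show False using nr by (meson order_trans)
    qed
    have "sent x (Some p) q c (rq P x c q) = integral {0..rq P x c q} (\<lambda>_. 0::real)"
      unfolding sent_def by (rule integral_cong) (rule z)
    then have "sent x (Some p) q c (rq P x c q) = 0" by simp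
    then show False using hq pq by simp
  qed
  have "recv P x p c \<le> ereal T" using rl hq by (meson ereal_less_eq(3) order_trans)
  then have pH: "p \<in> Hs P x c T" unfolding Hs_def using pP by simp
  have "rq P x c p \<le> rq P x c q" using rl hs_facts[OF V fP pH] by simp
  then show ?thesis using pH by simp
qed

lemma powr_split: "(2::real) powr (T - r) = 2 powr T * 2 powr (- r)"
  by (simp add: powr_add[symmetric])

lemma peer_bound:
  assumes V: "valid_schedule P U x" and fP: "finite P" and p: "p \<in> Hs P x c T"
  shows "1 + (\<Sum>q\<in>{q\<in>Hs P x c T. par P x c q = Some p}. 2 powr (T - rq P x c q)) \<le> 2 powr (T - rq P x c p)"
proof -
  define K where "K = {q\<in>Hs P x c T. par P x c q = Some p}"
  define a where "a = rq P x c p"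
  note hp = hs_facts[OF V fP p]
  have fK: "finite K" unfolding K_def Hs_def using fP by simp
  have hyp: "real (card S) \<le> R - a" if S: "S \<subseteq> K" "S \<noteq> {}" "\<forall>q\<in>S. rq P x c q \<le> R" for S R
  proof (rule count_bound[where f = "\<lambda>q. x (Some p) q c"])
    show "finite S" using S fK finite_subset by blast
    show "S \<noteq> {}" by fact
    show "\<And>i \<tau>. 0 \<le> x (Some p) i c \<tau>" by (rule vs_nonneg[OF V])
    show "\<And>i. x (Some p) i c integrable_on {0..R}" by (rule vs_int[OF V])
    show "(\<Sum>i\<in>S. x (Some p) i c \<tau>) \<le> 1" for \<tau>
    proof -
      have "(\<Sum>(p', c')\<in>(\<lambda>q. (q, c)) ` S. x (Some p) p' c' \<tau>) \<le> 1"
        by (rule vs_cap[OF V]) (use \<open>finite S\<close> in simp)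
      moreover have "(\<Sum>(p', c')\<in>(\<lambda>q. (q, c)) ` S. x (Some p) p' c' \<tau>) = (\<Sum>i\<in>S. x (Some p) i c \<tau>)"
        by (subst sum.reindex) (auto simp: inj_on_def)
      ultimately show ?thesis by simp
    qed
    show "x (Some p) i c \<tau> = 0" if "\<tau> < a" for i \<tau>
    proof (rule ccontr)
      assume "x (Some p) i c \<tau> \<noteq> 0"
      then have "x (Some p) i c \<tau> > 0" using vs_nonneg[OF V, of "Some p" i c \<tau>] by simp
      then have "recv P x p c \<le> ereal \<tau>" by (rule vs_fwd[OF V])
      then show False using hp that unfolding a_def by simp
    qed
    show "0 \<le> a" using hp unfolding a_def by simp
    show "1 \<le> integral {0..R} (x (Some p) i c)" if i: "i \<in> S" for i
    proof -
      have iK: "i \<in> Hs P x c T" "par P x c i = Some p" using i S unfolding K_def by auto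
      note hi = hs_facts[OF V fP iK(1)]
      have "sent x (Some p) i c (rq P x c i) \<le> sent x (Some p) i c R"
        by (rule sent_mono[OF V]) (use i S in auto)
      then show ?thesis using hi iK(2) unfolding sent_def by simp
    qed
  qed
  have gb: "(\<Sum>q\<in>K. 2 powr (- rq P x c q)) \<le> 2 powr (-a) - 2 powr (-a - real (card K))"
    by (rule geo_bound[OF fK hyp]) auto
  have cK: "a + real (card K) \<le> T"
  proof (cases "K = {}")
    case True then show ?thesis using hp unfolding a_def by simp
  next
    case False
    have "\<forall>q\<in>K. rq P x c q \<le> T" unfolding K_def using hs_facts[OF V fP] by auto
    then show ?thesis using hyp[of K T] False by simp
  qed
  then have pw: "2 powr (-T) \<le> 2 powr (-a - real (card K))" by (intro powr_mono) auto
  have gb2: "(\<Sum>q\<in>K. 2 powr (- rq P x c q)) \<le> 2 powr (-a) - 2 powr (-T)" using gb pw by linarith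
  have "(\<Sum>q\<in>K. 2 powr (T - rq P x c q)) = 2 powr T * (\<Sum>q\<in>K. 2 powr (- rq P x c q))"
    by (simp add: powr_split sum_distrib_left)
  also have "\<dots> \<le> 2 powr T * (2 powr (-a) - 2 powr (-T))" by (rule mult_left_mono[OF gb2]) simp
  also have "\<dots> = 2 powr (T - a) - 1"
  proof -
    have e1: "(2::real) powr T * 2 powr (-T) = 1" by (simp add: powr_minus)
    have e2: "(2::real) powr T * 2 powr (-a) = 2 powr (T - a)" by (simp add: powr_split)
    show ?thesis using e1 e2 by (simp add: right_diff_distrib)
  qed
  finally show ?thesis unfolding K_def a_def by simp
qed

lemma chunk_bound:
  assumes V: "valid_schedule P U x" and fP: "finite P"
  shows "real (card (Hs P x c T)) \<le> (\<Sum>q\<in>{q\<in>Hs P x c T. par P x c q = None}. 2 powr (T - rq P x c q))"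
proof -
  define H where "H = Hs P x c T"
  define w where "w q = 2 powr (T - rq P x c q)" for q
  define A where "A = {q\<in>H. par P x c q = None}"
  define B where "B = {q\<in>H. par P x c q \<noteq> None}"
  have fH: "finite H" unfolding H_def Hs_def using fP by simp
  have fB: "finite B" using fH unfolding B_def by simp
  have img: "par P x c ` B \<subseteq> Some ` H"
  proof
    fix y assume "y \<in> par P x c ` B"
    then obtain q where q: "q \<in> H" "par P x c q \<noteq> None" "y = par P x c q" unfolding B_def by auto
    then obtain p where p: "par P x c q = Some p" by auto
    then have "p \<in> H" using parent_in[OF V fP] q unfolding H_def by blast
    then show "y \<in> Some ` H" using p q by auto
  qed
  have grp: "(\<Sum>y\<in>Some ` H. \<Sum>q\<in>{q. q \<in> B \<and> par P x c q = y}. w q) = (\<Sum>q\<in>B. w q)"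
    by (rule sum.group[OF fB _ img]) (use fH in simp)
  have "(\<Sum>y\<in>Some ` H. \<Sum>q\<in>{q. q \<in> B \<and> par P x c q = y}. w q)
        = (\<Sum>p\<in>H. \<Sum>q\<in>{q. q \<in> B \<and> par P x c q = Some p}. w q)"
    by (subst sum.reindex) (auto simp: inj_on_def)
  also have "\<dots> = (\<Sum>p\<in>H. \<Sum>q\<in>{q\<in>H. par P x c q = Some p}. w q)"
    by (rule sum.cong) (auto simp: B_def intro!: sum.cong)
  finally have g2: "(\<Sum>p\<in>H. \<Sum>q\<in>{q\<in>H. par P x c q = Some p}. w q) = (\<Sum>q\<in>B. w q)" using grp by simp
  have "(\<Sum>p\<in>H. 1 + (\<Sum>q\<in>{q\<in>H. par P x c q = Some p}. w q)) \<le> (\<Sum>p\<in>H. w p)"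
    by (rule sum_mono) (use peer_bound[OF V fP] in \<open>auto simp: H_def w_def\<close>)
  then have "real (card H) + (\<Sum>q\<in>B. w q) \<le> (\<Sum>p\<in>H. w p)"
    using g2 by (simp add: sum.distrib)
  moreover have "(\<Sum>p\<in>H. w p) = (\<Sum>q\<in>A. w q) + (\<Sum>q\<in>B. w q)"
  proof -
    have "H = A \<union> B" "A \<inter> B = {}" unfolding A_def B_def by auto
    then show ?thesis using fH by (simp add: sum.union_disjoint)
  qed
  ultimately show ?thesis unfolding A_def H_def w_def by simp
qed



lemma source_bound:
  assumes V: "valid_schedule P U x" and fP: "finite P" and a1: "1 \<le> a" and aM: "a \<le> M"
  shows "(2::real)^((a-1)*U) * (\<Sum>c\<in>{a..M}. \<Sum>q\<in>{q\<in>Hs P x c (T c). par P x c q = None}. 2 powr (- rq P x c q)) \<le> 1"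
proof -
  define D where "D c = {q\<in>Hs P x c (T c). par P x c q = None}" for c
  define KK where "KK = Sigma {a..M} D"
  define a' where "a' = real ((a-1)*U)"
  define r where "r i = rq P x (fst i) (snd i)" for i
  have fD: "finite (D c)" for c unfolding D_def Hs_def using fP by simp
  have fKK: "finite KK" unfolding KK_def using fD by simp
  have hyp: "real (card S) \<le> R - a'" if S: "S \<subseteq> KK" "S \<noteq> {}" "\<forall>i\<in>S. r i \<le> R" for S R
  proof (rule count_bound[where f = "\<lambda>i. x None (snd i) (fst i)"])
    show fS: "finite S" using S fKK finite_subset by blast
    show "S \<noteq> {}" by fact
    show "\<And>i \<tau>. 0 \<le> x None (snd i) (fst i) \<tau>" by (rule vs_nonneg[OF V])
    show "\<And>i. x None (snd i) (fst i) integrable_on {0..R}" by (rule vs_int[OF V])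
    show "(\<Sum>i\<in>S. x None (snd i) (fst i) \<tau>) \<le> 1" for \<tau>
    proof -
      have "(\<Sum>(p', c')\<in>(\<lambda>i. (snd i, fst i)) ` S. x None p' c' \<tau>) \<le> 1"
        by (rule vs_cap[OF V]) (use fS in simp)
      moreover have "(\<Sum>(p', c')\<in>(\<lambda>i. (snd i, fst i)) ` S. x None p' c' \<tau>) = (\<Sum>i\<in>S. x None (snd i) (fst i) \<tau>)"
        by (subst sum.reindex) (auto simp: inj_on_def prod_eq_iff)
      ultimately show ?thesis by simp
    qed
    show "x None (snd i) (fst i) \<tau> = 0" if i: "i \<in> S" and t: "\<tau> < a'" for i \<tau>
    proof (rule ccontr)
      assume "x None (snd i) (fst i) \<tau> \<noteq> 0"
      then have "x None (snd i) (fst i) \<tau> > 0" using vs_nonneg[OF V, of None "snd i" "fst i" \<tau>] by simp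
      then have g: "real ((fst i - 1) * U) \<le> \<tau>" by (rule vs_src[OF V])
      have "fst i \<ge> a" using i S unfolding KK_def by auto
      then have "(a - 1) * U \<le> (fst i - 1) * U" by (intro mult_le_mono1 diff_le_mono)
      then have "a' \<le> real ((fst i - 1) * U)" unfolding a'_def by linarith
      then show False using g t by simp
    qed
    show "0 \<le> a'" unfolding a'_def by simp
    show "1 \<le> integral {0..R} (x None (snd i) (fst i))" if i: "i \<in> S" for i
    proof -
      have iK: "snd i \<in> Hs P x (fst i) (T (fst i))" "par P x (fst i) (snd i) = None"
        using i S unfolding KK_def D_def by auto
      note hi = hs_facts[OF V fP iK(1)]
      have "sent x None (snd i) (fst i) (rq P x (fst i) (snd i)) \<le> sent x None (snd i) (fst i) R"
        by (rule sent_mono[OF V]) (use i S in \<open>simp add: r_def\<close>)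
      then show ?thesis using hi iK(2) unfolding sent_def by simp
    qed
  qed
  have gb: "(\<Sum>i\<in>KK. 2 powr (- r i)) \<le> 2 powr (-a') - 2 powr (-a' - real (card KK))"
    by (rule geo_bound[OF fKK hyp])
  have "(\<Sum>c\<in>{a..M}. \<Sum>q\<in>D c. 2 powr (- rq P x c q)) = (\<Sum>i\<in>KK. 2 powr (- r i))"
    unfolding KK_def r_def by (subst sum.Sigma) (auto simp: fD case_prod_beta)
  also have "\<dots> \<le> 2 powr (-a')"
  proof -
    have "0 < (2::real) powr (-a' - real (card KK))" by simp
    then show ?thesis using gb by linarith
  qed
  finally have s: "(\<Sum>c\<in>{a..M}. \<Sum>q\<in>D c. 2 powr (- rq P x c q)) \<le> 2 powr (-a')" .
  have pa: "(2::real) powr a' = 2^((a-1)*U)" unfolding a'_def by (rule powr_realpow) simp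
  have e: "(2::real)^((a-1)*U) * 2 powr (-a') = 1"
    by (simp only: powr_minus pa) simp
  have "(2::real)^((a-1)*U) * (\<Sum>c\<in>{a..M}. \<Sum>q\<in>D c. 2 powr (- rq P x c q)) \<le> (2::real)^((a-1)*U) * 2 powr (-a')"
    by (rule mult_left_mono[OF s]) simp
  then have "(2::real)^((a-1)*U) * (\<Sum>c\<in>{a..M}. \<Sum>q\<in>D c. 2 powr (- rq P x c q)) \<le> 1"
    by (simp only: e)
  then show ?thesis unfolding D_def .
qed

theorem mainTheorem2:
  fixes P :: "'p set" and U :: nat and x :: "'p schedule"
  assumes "finite P" and "U \<ge> 1" and "valid_schedule P U x"
  shows "(\<forall>t::nat. Ndiff P U x (real t) \<le> (\<Sum>j\<in>{1..U}. S_inf (int t - int j + 1)))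
       \<and> (\<forall>t::nat. t \<ge> U \<longrightarrow>
            real (Ndiff P U x (real t)) \<le> (\<Sum>j\<in>{1..U}. (2::real) ^ (t - j))
          \<and> (\<Sum>j\<in>{1..U}. (2::real) ^ (t - j)) = 2 ^ t * (1 - (1/2) ^ U))"
proof -
  note fP = assms(1) and V = assms(3)
  define \<beta> where "\<beta> = 1 - (1/2::real)^U"
  have main: "real (Ndiff P U x (real t)) \<le> 2^t * \<beta>" for t :: nat
  proof -
    define Q where "Q = {p\<in>P. Dmax P U x p \<le> ereal (real t)}"
    define n where "n = card Q"
    have nN: "Ndiff P U x (real t) = n" unfolding n_def Q_def Ndiff_def by simp
    define Tc where "Tc c = real ((c-1)*U) + real t" for c :: nat
    define Vc where "Vc c = (\<Sum>q\<in>{q\<in>Hs P x c (Tc c). par P x c q = None}. 2 powr (- rq P x c q))" for c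
    have QH: "Q \<subseteq> Hs P x c (Tc c)" if c1: "1 \<le> c" for c
    proof
      fix p assume p: "p \<in> Q"
      have "delay P U x c p \<le> Dmax P U x p" unfolding Dmax_def by (rule SUP_upper) (use c1 in simp)
      also have "\<dots> \<le> ereal (real t)" using p unfolding Q_def by simp
      finally have d: "recv P x p c - ereal (real ((c - 1) * U)) \<le> ereal (real t)" unfolding delay_def .
      have "recv P x p c \<le> ereal (Tc c)"
        using d unfolding Tc_def by (cases "recv P x p c") (auto simp: algebra_simps)
      then show "p \<in> Hs P x c (Tc c)" using p unfolding Q_def Hs_def by simp
    qed
    have cb: "real n \<le> 2^t * (2^((c-1)*U) * Vc c)" if c1: "1 \<le> c" for c
    proof -
      have fH: "finite (Hs P x c (Tc c))" unfolding Hs_def using fP by simp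
      have "real n \<le> real (card (Hs P x c (Tc c)))" unfolding n_def
        using card_mono[OF fH QH[OF c1]] by simp
      also have "\<dots> \<le> (\<Sum>q\<in>{q\<in>Hs P x c (Tc c). par P x c q = None}. 2 powr (Tc c - rq P x c q))"
        by (rule chunk_bound[OF V fP])
      also have "\<dots> = 2 powr (Tc c) * Vc c" unfolding Vc_def
        by (simp add: powr_split sum_distrib_left)
      also have "2 powr (Tc c) = (2::real)^t * 2^((c-1)*U)"
      proof -
        have "(2::real) powr (Tc c) = 2 powr (real ((c-1)*U)) * 2 powr (real t)"
          unfolding Tc_def by (rule powr_add)
        also have "\<dots> = 2^((c-1)*U) * 2^t" by (simp only: powr_realpow[of 2] zero_less_numeral)
        finally show ?thesis by simp
      qed
      finally show ?thesis by (simp add: mult.assoc)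
    qed
    have Mb: "real M * real n \<le> 2^t * (1 + real M * \<beta>)" if M1: "1 \<le> M" for M
    proof -
      have "real M * real n = (\<Sum>c\<in>{1..M}. real n)" by simp
      also have "\<dots> \<le> (\<Sum>c\<in>{1..M}. 2^t * (2^((c-1)*U) * Vc c))" by (rule sum_mono) (use cb in simp)
      also have "\<dots> = 2^t * (\<Sum>c\<in>{1..M}. 2^((c-1)*U) * Vc c)" by (simp add: sum_distrib_left)
      also have "\<dots> \<le> 2^t * (1 + real (M - 1) * \<beta>)"
      proof (rule mult_left_mono)
        show "(\<Sum>c\<in>{1..M}. (2::real)^((c-1)*U) * Vc c) \<le> 1 + real (M - 1) * \<beta>"
          unfolding \<beta>_def
          by (rule abel) (unfold Vc_def, rule source_bound[OF V fP], auto)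
      qed simp
      also have "\<dots> \<le> 2^t * (1 + real M * \<beta>)"
      proof (rule mult_left_mono)
        have "0 \<le> \<beta>" unfolding \<beta>_def by (simp add: power_le_one)
        then show "1 + real (M - 1) * \<beta> \<le> 1 + real M * \<beta>" by (intro add_left_mono mult_right_mono) auto
      qed simp
      finally show ?thesis .
    qed
    have "real n \<le> 2^t * \<beta>"
    proof (rule ccontr)
      assume "\<not> real n \<le> 2^t * \<beta>"
      then have pos: "real n - 2^t * \<beta> > 0" by simp
      obtain M :: nat where M: "2^t / (real n - 2^t * \<beta>) < real M" using reals_Archimedean2 by blast
      have "0 < real M" using M pos by (meson divide_pos_pos le_less_trans less_le zero_less_numeral zero_less_power)
      then have M1: "1 \<le> M" by simp
      have "2^t < real M * (real n - 2^t * \<beta>)" using M pos by (simp add: divide_less_eq mult.commute)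
      then show False using Mb[OF M1] by (simp add: algebra_simps)
    qed
    then show ?thesis using nN by simp
  qed
  have part1: "Ndiff P U x (real t) \<le> (\<Sum>j\<in>{1..U}. S_inf (int t - int j + 1))" for t :: nat
  proof -
    have m: "real (Ndiff P U x (real t)) \<le> 2^t * \<beta>" by (rule main)
    have ss: "real (\<Sum>j\<in>{1..U}. S_inf (int t - int j + 1)) = 2^t - 2^(t - min t U)" by (rule S_sum)
    have "real (Ndiff P U x (real t)) \<le> real (\<Sum>j\<in>{1..U}. S_inf (int t - int j + 1))"
    proof (cases "U \<le> t")
      case True
      have "(2::real)^t * \<beta> = 2^t - 2^(t-U)" unfolding \<beta>_def using True
        by (simp add: power_diff power_one_over field_simps)
      moreover have "(2::real)^(t - min t U) = 2^(t - U)" using True by simp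
      ultimately show ?thesis using m ss by linarith
    next
      case False
      have "(1/2::real)^U > 0" by simp
      then have "(2::real)^t * \<beta> < 2^t" unfolding \<beta>_def by simp
      then have "real (Ndiff P U x (real t)) < 2^t" using m by linarith
      then have "Ndiff P U x (real t) < 2^t"
        by (metis of_nat_less_iff of_nat_numeral of_nat_power)
      then have "Ndiff P U x (real t) + 1 \<le> 2^t" by simp
      then have "real (Ndiff P U x (real t) + 1) \<le> real ((2::nat)^t)" by (simp only: of_nat_le_iff)
      then have "real (Ndiff P U x (real t)) \<le> 2^t - 1" by simp
      moreover have "(2::real)^(t - min t U) = 1" using False by simp
      ultimately show ?thesis using ss by linarith
    qed
    then show ?thesis by (simp only: of_nat_le_iff)
  qed
  show ?thesis
  proof (intro conjI allI impI)
    fix t show "Ndiff P U x (real t) \<le> (\<Sum>j\<in>{1..U}. S_inf (int t - int j + 1))" by (rule part1)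
  next
    fix t :: nat assume tU: "U \<le> t"
    show "(\<Sum>j\<in>{1..U}. (2::real) ^ (t - j)) = 2 ^ t * (1 - (1/2) ^ U)" by (rule pow_sum[OF tU])
    then show "real (Ndiff P U x (real t)) \<le> (\<Sum>j\<in>{1..U}. (2::real) ^ (t - j))"
      using main[of t] unfolding \<beta>_def by simp
  qed
qed

end
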